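(* Let $S_{r,N}$ be an atomic exponential Puiseux semiring. The following are equivalent: (1) $r\in\mathbb{N}$; (2) $S_{r,N}$ is locally tame; (3) $S_{r,N}$ is globally tame.
   Context: $\mathbb{N}=\{0,1,2,\dots\}$. A numerical monoid $N$ is an additive submonoid of $\mathbb{N}$ with finite complement. For $r\in\mathbb{Q}_{>0}$, $S_{r,N}$ is the additive submonoid of $\mathbb{Q}_{\ge0}$ generated by $\{r^k:k\in N\}$. For an atomic monoid $M$ with factorization sets $\mathsf{Z}(y)$ and factorization monoid $\mathsf{Z}(M)$ (free commutative monoid on the atoms), with $\mathsf{d}(z,z')=\max(|z|,|z'|)-|\gcd(z,z')|$: for an atom $a$, the tame degree $\mathsf{t}(a)$ is the smallest $n\in\mathbb{N}\cup\{\infty\}$ such that for every $y\in M$ with $\mathsf{Z}(y)\cap(a+\mathsf{Z}(M))\neq\emptyset$ and every $z\in\mathsf{Z}(y)$ there exists $z'\in\mathsf{Z}(y)\cap(a+\mathsf{Z}(M))$ (a factorization containing $a$) with $\mathsf{d}(z,z')\le n$; $\mathsf{t}(M)=\sup_a\mathsf{t}(a)$. $M$ is locally tame if $\mathsf{t}(a)<\infty$ for every atom $a$, and globally tame if $\mathsf{t}(M)<\infty$. *)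

theory Defs
  imports Complex_Main "HOL-Library.Multiset" "HOL-Library.Extended_Nat"
begin

definition numerical_monoid :: "nat set \<Rightarrow> bool" where
  "numerical_monoid N \<longleftrightarrow> 0 \<in> N \<and> (\<forall>a\<in>N. \<forall>b\<in>N. a + b \<in> N) \<and> finite (UNIV - N)"

inductive_set exp_puiseux :: "rat \<Rightarrow> nat set \<Rightarrow> rat set" for r :: rat and N :: "nat set" where
  zero: "0 \<in> exp_puiseux r N"
| gen: "k \<in> N \<Longrightarrow> r ^ k \<in> exp_puiseux r N"
| add: "x \<in> exp_puiseux r N \<Longrightarrow> y \<in> exp_puiseux r N \<Longrightarrow> x + y \<in> exp_puiseux r N"

text \<open>Atoms of a (reduced) additive submonoid M of the nonnegative rationals
  (its only unit is 0).\<close>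
definition atoms :: "rat set \<Rightarrow> rat set" where
  "atoms M = {a \<in> M. a \<noteq> 0 \<and> (\<forall>b\<in>M. \<forall>c\<in>M. a = b + c \<longrightarrow> b = 0 \<or> c = 0)}"

definition factorizations :: "rat set \<Rightarrow> rat \<Rightarrow> rat multiset set" where
  "factorizations M y = {z. set_mset z \<subseteq> atoms M \<and> sum_mset z = y}"

definition atomic :: "rat set \<Rightarrow> bool" where
  "atomic M \<longleftrightarrow> (\<forall>y\<in>M. y \<noteq> 0 \<longrightarrow> factorizations M y \<noteq> {})"

definition fact_dist :: "rat multiset \<Rightarrow> rat multiset \<Rightarrow> nat" where
  "fact_dist z z' = max (size z) (size z') - size (z \<inter># z')"

text \<open>Tame degree of an atom a (infinity if no finite bound exists).\<close>
definition tame_degree :: "rat set \<Rightarrow> rat \<Rightarrow> enat" where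
  "tame_degree M a = Inf {n :: enat. \<forall>y\<in>M. (\<exists>w\<in>factorizations M y. a \<in># w) \<longrightarrow>
      (\<forall>z\<in>factorizations M y. \<exists>z'\<in>factorizations M y. a \<in># z' \<and> enat (fact_dist z z') \<le> n)}"

definition monoid_tame_degree :: "rat set \<Rightarrow> enat" where
  "monoid_tame_degree M = (SUP a\<in>atoms M. tame_degree M a)"

definition locally_tame :: "rat set \<Rightarrow> bool" where
  "locally_tame M \<longleftrightarrow> (\<forall>a\<in>atoms M. tame_degree M a < \<infinity>)"

definition globally_tame :: "rat set \<Rightarrow> bool" where
  "globally_tame M \<longleftrightarrow> monoid_tame_degree M < \<infinity>"

end

theory Submission
  imports Defs
begin


lemma ep_nonneg: assumes "r > 0" "x \<in> exp_puiseux r N" shows "0 \<le> x"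
  using assms(2) by induction (use assms(1) in auto)

lemma ep_split:
  assumes "r > 0" "x \<in> exp_puiseux r N"
  shows "x = 0 \<or> (\<exists>k\<in>N. x = r ^ k) \<or> (\<exists>b\<in>exp_puiseux r N. \<exists>c\<in>exp_puiseux r N. b \<noteq> 0 \<and> c \<noteq> 0 \<and> x = b + c)"
  using assms(2)
proof induction
  case zero then show ?case by simp
next
  case (gen k) then show ?case by blast
next
  case (add x y)
  then show ?case
  proof (cases "x = 0 \<or> y = 0")
    case True
    then show ?thesis
    proof
      assume "x = 0" then show ?thesis using add.IH(2) by simp
    next
      assume "y = 0" then show ?thesis using add.IH(1) by simp
    qed
  next
    case False then show ?thesis using add.hyps by blast
  qed
qed

lemma atom_gen: assumes "r > 0" "a \<in> atoms (exp_puiseux r N)" shows "\<exists>k\<in>N. a = r ^ k"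
  using ep_split[OF assms(1), of a N] assms(2) unfolding atoms_def by blast

lemma atoms_sub: "atoms M \<subseteq> M" unfolding atoms_def by auto

lemma sum_in_ep: "set_mset w \<subseteq> exp_puiseux r N \<Longrightarrow> sum_mset w \<in> exp_puiseux r N"
  by (induction w) (auto intro: exp_puiseux.intros)

lemma sum_nonneg_ms: fixes z :: "rat multiset" shows "\<forall>x\<in>#z. 0 \<le> x \<Longrightarrow> 0 \<le> sum_mset z"
  by (induction z) auto

lemma elem_le_sum: fixes z :: "rat multiset"
  assumes "\<forall>x\<in>#z. 0 \<le> x" "x \<in># z" shows "x \<le> sum_mset z"
proof -
  have "z = add_mset x (z - {#x#})" using assms(2) by simp
  then have "sum_mset z = x + sum_mset (z - {#x#})" by (metis sum_mset.add_mset)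
  moreover have "0 \<le> sum_mset (z - {#x#})"
    using assms(1) by (intro sum_nonneg_ms) (meson in_diffD)
  ultimately show ?thesis by simp
qed

lemma sum_le_size: fixes u :: "rat multiset"
  assumes "\<forall>x\<in>#u. x \<le> b" shows "sum_mset u \<le> of_nat (size u) * b"
  using assms by (induction u) (auto simp: algebra_simps)

lemma sum_const: fixes u :: "rat multiset"
  assumes "\<forall>x\<in>#u. x = b" shows "sum_mset u = of_nat (size u) * b"
  using assms by (induction u) (auto simp: algebra_simps)

lemma sum_repeat: "sum_mset (repeat_mset n (f::rat multiset)) = of_nat n * sum_mset f"
  by (induction n) (auto simp: algebra_simps)

lemma dist_ge:
  fixes z z' :: "rat multiset"
  shows "size (z - (z \<inter># z')) \<le> fact_dist z z'" "size (z' - (z \<inter># z')) \<le> fact_dist z z'"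
proof -
  have s1: "size (z - (z \<inter># z')) = size z - size (z \<inter># z')"
    using size_Diff_submset[of "z \<inter># z'" z] by (metis subset_mset.inf.cobounded1)
  have s2: "size (z' - (z \<inter># z')) = size z' - size (z \<inter># z')"
    using size_Diff_submset[of "z \<inter># z'" z'] by (metis subset_mset.inf.cobounded2)
  show "size (z - (z \<inter># z')) \<le> fact_dist z z'" "size (z' - (z \<inter># z')) \<le> fact_dist z z'"
    unfolding fact_dist_def s1 s2 by auto
qed

lemma sum_diff_eq:
  fixes z z' :: "rat multiset"
  assumes "sum_mset z = sum_mset z'"
  shows "sum_mset (z - (z \<inter># z')) = sum_mset (z' - (z \<inter># z'))"
proof -
  have "z = (z - (z \<inter># z')) + (z \<inter># z')" by (metis subset_mset.diff_add subset_mset.inf.cobounded1)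
  then have a: "sum_mset z = sum_mset (z - (z \<inter># z')) + sum_mset (z \<inter># z')" by (metis sum_mset.union)
  have "z' = (z' - (z \<inter># z')) + (z \<inter># z')" by (metis subset_mset.diff_add subset_mset.inf.cobounded2)
  then have b: "sum_mset z' = sum_mset (z' - (z \<inter># z')) + sum_mset (z \<inter># z')" by (metis sum_mset.union)
  show ?thesis using a b assms by simp
qed

lemma mem_diff_inter:
  assumes "a \<in># z'" "a \<notin># z" shows "a \<in># z' - (z \<inter># z')"
  using assms by (simp add: in_diff_count not_in_iff)

lemma tame_inf:
  assumes "\<And>D::nat. \<exists>y\<in>M. (\<exists>w\<in>factorizations M y. a \<in># w) \<and>
     (\<exists>z\<in>factorizations M y. \<forall>z'\<in>factorizations M y. a \<in># z' \<longrightarrow> D < fact_dist z z')"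
  shows "tame_degree M a = \<infinity>"
  unfolding tame_degree_def
proof (rule Inf_eqI)
  fix n :: enat
  assume n: "n \<in> {n. \<forall>y\<in>M. (\<exists>w\<in>factorizations M y. a \<in># w) \<longrightarrow>
      (\<forall>z\<in>factorizations M y. \<exists>z'\<in>factorizations M y. a \<in># z' \<and> enat (fact_dist z z') \<le> n)}"
  show "\<infinity> \<le> n"
  proof (cases n)
    case (enat D)
    from assms[of D] obtain y w z where y: "y \<in> M" "w \<in> factorizations M y" "a \<in># w" "z \<in> factorizations M y"
      and h: "\<forall>z'\<in>factorizations M y. a \<in># z' \<longrightarrow> D < fact_dist z z'" by blast
    from n y obtain z' where "z' \<in> factorizations M y" "a \<in># z'" "enat (fact_dist z z') \<le> n" by blast
    with h enat show ?thesis by fastforce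
  qed simp
qed auto



lemma dvd_sum_ms: "(\<forall>x\<in>#A. (d::nat) dvd f x) \<Longrightarrow> d dvd (\<Sum>x\<in>#A. f x)"
  by (induction A) auto

lemma term_le_sum_ms: "x \<in># A \<Longrightarrow> (f x::nat) \<le> (\<Sum>y\<in>#A. f y)"
proof -
  assume "x \<in># A"
  then have "A = add_mset x (A - {#x#})" by simp
  then have "(\<Sum>y\<in>#A. f y) = f x + (\<Sum>y\<in>#(A - {#x#}). f y)" by (metis image_mset_add_mset sum_mset.add_mset)
  then show ?thesis by simp
qed

lemma sum_cong_ms: "(\<And>x. x \<in># A \<Longrightarrow> f x = g x) \<Longrightarrow> (\<Sum>x\<in>#A. f x) = (\<Sum>x\<in>#A. g x)"
  by (metis image_mset_cong)

lemma count_bound: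
  fixes p q n c :: nat and K :: "nat multiset"
  assumes pq: "q < p" "0 < q" "coprime p q" and K0: "0 \<in># K" and n1: "1 \<le> n"
    and eqr: "(\<Sum>k\<in>#K. (of_nat p / of_nat q :: rat)^k) = of_nat c * (of_nat p / of_nat q)^n"
  shows "p^(n-1) \<le> q^(n-1) * 2^(size K)"
proof -
  define B where "B j = (\<Sum>k\<in># filter_mset (\<lambda>k. k<j) K. p^k * q^(j-1-k))" for j
  define E where "E j = size (filter_mset (\<lambda>k. k<j) K)" for j
  define M where "M = n + sum_mset K"
  have kM: "k \<le> M" if "k \<in># K" for k
    using term_le_sum_ms[of k K "\<lambda>x. x"] that unfolding M_def by simp
  have qr: "(of_nat q::rat) \<noteq> 0" using pq by simp
  have eqn: "(\<Sum>k\<in>#K. p^k * q^(M-k)) = c * p^n * q^(M-n)"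
  proof -
    have "(of_nat (\<Sum>k\<in>#K. p^k * q^(M-k))::rat) = (\<Sum>k\<in>#K. of_nat (p^k * q^(M-k)))"
      by (simp add: multiset.map_comp comp_def)
    also have "\<dots> = (\<Sum>k\<in>#K. (of_nat p / of_nat q :: rat)^k * of_nat q ^ M)"
    proof (rule sum_cong_ms)
      fix k assume "k \<in># K"
      then have "M = k + (M - k)" using kM by simp
      then have "(of_nat q::rat) ^ M = of_nat q ^ k * of_nat q ^ (M-k)" by (metis power_add)
      then show "(of_nat (p^k * q^(M-k))::rat) = (of_nat p / of_nat q)^k * of_nat q ^ M"
        using qr by (simp add: power_divide)
    qed
    also have "\<dots> = (\<Sum>k\<in>#K. (of_nat p / of_nat q :: rat)^k) * of_nat q ^ M"
      by (simp add: sum_mset_distrib_right)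
    also have "\<dots> = of_nat c * (of_nat p / of_nat q)^n * of_nat q ^ M" using eqr by simp
    also have "\<dots> = of_nat (c * p^n * q^(M-n))"
    proof -
      have "n \<le> M" unfolding M_def by simp
      then have "(of_nat q::rat) ^ M = of_nat q ^ n * of_nat q ^ (M-n)" by (metis power_add le_add_diff_inverse)
      then show ?thesis using qr by (simp add: power_divide)
    qed
    finally show ?thesis by (metis of_nat_eq_iff)
  qed
  have dvdB: "p^j dvd B j" if j: "1 \<le> j" "j \<le> n" for j
  proof -
    have jM: "j \<le> M" using j unfolding M_def by simp
    have split: "(\<Sum>k\<in>#K. p^k * q^(M-k)) = (\<Sum>k\<in>#filter_mset (\<lambda>k. k<j) K. p^k * q^(M-k))
       + (\<Sum>k\<in>#filter_mset (\<lambda>k. \<not> k<j) K. p^k * q^(M-k))"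
      by (simp only: sum_mset.union[symmetric] image_mset_union[symmetric] multiset_partition[symmetric])
    have low: "(\<Sum>k\<in>#filter_mset (\<lambda>k. k<j) K. p^k * q^(M-k)) = q^(M-j+1) * B j"
      unfolding B_def sum_mset_distrib_left
    proof (rule sum_cong_ms)
      fix k assume "k \<in># filter_mset (\<lambda>k. k<j) K"
      then have "k < j" by simp
      then have "M - k = (M-j+1) + (j-1-k)" using jM by simp
      then have "q^(M-k) = q^(M-j+1) * q^(j-1-k)" by (metis power_add)
      then show "p^k * q^(M-k) = q^(M-j+1) * (p^k * q^(j-1-k))" by simp
    qed
    have high: "p^j dvd (\<Sum>k\<in>#filter_mset (\<lambda>k. \<not> k<j) K. p^k * q^(M-k))"
    proof (rule dvd_sum_ms, rule ballI)
      fix k assume "k \<in># filter_mset (\<lambda>k. \<not> k<j) K"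
      then have "j \<le> k" by simp
      then have "p^k = p^j * p^(k-j)" by (metis power_add le_add_diff_inverse)
      then show "p^j dvd p^k * q^(M-k)" by simp
    qed
    have tot: "p^j dvd c * p^n * q^(M-n)"
    proof -
      have "p^n = p^j * p^(n-j)" using j by (metis power_add le_add_diff_inverse)
      then show ?thesis by simp
    qed
    have "p^j dvd q^(M-j+1) * B j + (\<Sum>k\<in>#filter_mset (\<lambda>k. \<not> k<j) K. p^k * q^(M-k))"
      using tot eqn split low by simp
    then have "p^j dvd q^(M-j+1) * B j"
      using dvd_add_left_iff[OF high] by blast
    moreover have "coprime (p^j) (q^(M-j+1))" using pq by simp
    ultimately show ?thesis using coprime_dvd_mult_right_iff by blast
  qed
  have Bpos: "1 \<le> B j" if "1 \<le> j" for j
  proof -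
    have "0 \<in># filter_mset (\<lambda>k. k<j) K" using K0 that by simp
    then have "p^0 * q^(j-1-0) \<le> B j" unfolding B_def by (rule term_le_sum_ms)
    moreover have "1 \<le> q^(j-1)" using pq by simp
    ultimately show ?thesis by simp
  qed
  have rec: "B (Suc j) = q * B j + size (filter_mset (\<lambda>k. k = j) K) * p^j
     \<and> E (Suc j) = E j + size (filter_mset (\<lambda>k. k = j) K)" for j
  proof -
    have fs: "filter_mset (\<lambda>k. k < Suc j) K = filter_mset (\<lambda>k. k<j) K + filter_mset (\<lambda>k. k = j) K"
      by (auto simp: multiset_eq_iff)
    have a: "(\<Sum>k\<in>#filter_mset (\<lambda>k. k<j) K. p^k * q^(Suc j - 1 - k)) = q * B j"
      unfolding B_def sum_mset_distrib_left
    proof (rule sum_cong_ms)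
      fix k assume "k \<in># filter_mset (\<lambda>k. k<j) K"
      then have "k < j" by simp
      then have "Suc j - 1 - k = Suc (j-1-k)" by simp
      then show "p^k * q^(Suc j - 1 - k) = q * (p^k * q^(j-1-k))" by simp
    qed
    have b: "(\<Sum>k\<in>#filter_mset (\<lambda>k. k = j) K. p^k * q^(Suc j - 1 - k)) = size (filter_mset (\<lambda>k. k = j) K) * p^j"
    proof -
      have "(\<Sum>k\<in>#filter_mset (\<lambda>k. k = j) K. p^k * q^(Suc j - 1 - k)) = (\<Sum>k\<in>#filter_mset (\<lambda>k. k = j) K. p^j)"
        by (rule sum_cong_ms) simp
      then show ?thesis by simp
    qed
    show ?thesis unfolding B_def E_def fs using a b unfolding B_def by simp
  qed
  have ind: "j \<le> n \<longrightarrow> B j \<le> p * q^(j-1) * 2^(E j)" if "1 \<le> j" for j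
    using that
  proof (induction j rule: dec_induct)
    case base
    have "B 1 = size (filter_mset (\<lambda>k. k = 0) K)" and "E 1 = size (filter_mset (\<lambda>k. k = 0) K)"
      using rec[of 0] unfolding B_def E_def by simp_all
    moreover have "s \<le> p * 2^s" for s :: nat
    proof -
      have "s \<le> 2^s" using less_exp[of s] by simp
      also have "\<dots> \<le> p * 2^s" using pq by simp
      finally show ?thesis .
    qed
    ultimately show ?case by simp
  next
    case (step j)
    show ?case
    proof
      assume jn: "Suc j \<le> n"
      define s where "s = size (filter_mset (\<lambda>k. k = j) K)"
      have IH: "B j \<le> p * q^(j-1) * 2^(E j)" using step jn by simp
      have pj: "p^j \<le> B j"
        using dvdB[of j] Bpos[of j] step jn by (simp add: dvd_imp_le)
      have "B (Suc j) = q * B j + s * p^j" using rec[of j] unfolding s_def by simp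
      also have "\<dots> \<le> q * B j + s * B j" using pj by simp
      also have "\<dots> = (q + s) * B j" by (simp add: algebra_simps)
      also have "\<dots> \<le> (q * 2^s) * B j"
      proof -
        have "1 + s \<le> 2^s" using less_exp[of s] by (metis Suc_leI plus_1_eq_Suc)
        then have "q * (1 + s) \<le> q * 2^s" by (rule mult_le_mono2)
        moreover have "q + s \<le> q * (1 + s)" using pq by (simp add: algebra_simps)
        ultimately show ?thesis by (meson mult_le_mono1 order_trans)
      qed
      also have "\<dots> \<le> (q * 2^s) * (p * q^(j-1) * 2^(E j))" using IH by simp
      also have "\<dots> = p * (q * q^(j-1)) * (2^s * 2^(E j))" by (simp add: algebra_simps)
      also have "\<dots> = p * q^(Suc j - 1) * 2^(E (Suc j))"
        using rec[of j] step(1) unfolding s_def by (simp add: power_add power_Suc[symmetric] algebra_simps)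
      finally show "B (Suc j) \<le> p * q^(Suc j - 1) * 2^(E (Suc j))" .
    qed
  qed
  have "p^n \<le> B n" using dvdB[of n] Bpos[of n] n1 by (simp add: dvd_imp_le)
  also have "\<dots> \<le> p * q^(n-1) * 2^(E n)" using ind[of n] n1 by simp
  also have "\<dots> \<le> p * q^(n-1) * 2^(size K)" unfolding E_def by simp
  finally have "p * p^(n-1) \<le> p * (q^(n-1) * 2^(size K))"
    using n1 by (metis Suc_diff_le diff_Suc_1 power_Suc mult.assoc)
  then show ?thesis using pq by simp
qed



lemma rat_bern: "0 \<le> (h::rat) \<Longrightarrow> 1 + of_nat n * h \<le> (1 + h)^n"
proof (induction n)
  case (Suc n)
  have "1 + of_nat (Suc n) * h \<le> (1 + of_nat n * h) * (1 + h)"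
    using Suc.prems by (simp add: algebra_simps)
  also have "\<dots> \<le> (1 + h)^n * (1 + h)" using Suc by (intro mult_right_mono) auto
  finally show ?case by (simp add: mult.commute)
qed simp

lemma rat_arch_pow: assumes "(x::rat) > 1" shows "\<exists>n. y < x^n"
proof -
  obtain n where "y < of_nat n * (x - 1)" using ex_less_of_nat_mult[of "x - 1" y] assms by auto
  moreover have "1 + of_nat n * (x - 1) \<le> (1 + (x - 1))^n" using assms by (intro rat_bern) simp
  ultimately have "y < x^n" by simp
  then show ?thesis by blast
qed

lemma rat_pq:
  assumes "(r::rat) > 0"
  obtains p q :: nat where "r = of_nat p / of_nat q" "0 < q" "0 < p" "coprime p q"
proof -
  obtain P Q where PQ: "quotient_of r = (P, Q)" by (cases "quotient_of r")
  have r: "r = of_int P / of_int Q" using quotient_of_div[OF PQ] .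
  have Q: "Q > 0" using quotient_of_denom_pos[OF PQ] .
  have cp: "coprime P Q" using quotient_of_coprime[OF PQ] .
  have P: "P > 0"
  proof (rule ccontr)
    assume "\<not> P > 0"
    then have "of_int P / of_int Q \<le> (0::rat)" using Q by (simp add: divide_nonpos_pos)
    then show False using r assms by simp
  qed
  have "r = of_nat (nat P) / of_nat (nat Q)" using r P Q by simp
  moreover have "coprime (nat P) (nat Q)" using cp P Q
    by (metis coprime_int_iff int_nat_eq less_le)
  moreover have "0 < nat Q" "0 < nat P" using P Q by simp_all
  ultimately show ?thesis using that by blast
qed

lemma nm_bound: assumes "numerical_monoid N" obtains B where "\<forall>k\<ge>B. k \<in> N"
proof -
  have "finite (UNIV - N)" using assms unfolding numerical_monoid_def by simp
  then obtain m where "\<forall>k\<in>UNIV - N. k \<le> m" by (auto simp: finite_nat_set_iff_bounded_le)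
  then have "\<forall>k\<ge>Suc m. k \<in> N" by (metis DiffI UNIV_I not_less_eq_eq)
  then show ?thesis using that by blast
qed



lemma glob_loc: "globally_tame M \<Longrightarrow> locally_tame M"
  unfolding globally_tame_def locally_tame_def monoid_tame_degree_def
  by (meson SUP_upper le_less_trans)

lemma int_case:
  assumes "r \<in> \<nat>" "numerical_monoid N"
  shows "globally_tame (exp_puiseux r N)"
proof -
  let ?S = "exp_puiseux r N"
  have N0: "0 \<in> N" using assms(2) unfolding numerical_monoid_def by simp
  have inN: "x \<in> \<nat>" if "x \<in> ?S" for x
    using that
  proof induction
    case (gen k)
    obtain t where "r = of_nat t" using assms(1) by (auto elim: Nats_cases)
    then have "r ^ k = of_nat (t ^ k)" by simp
    then show ?case by (metis of_nat_in_Nats)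
  qed (auto intro: Nats_add)
  have one: "(1::rat) \<in> ?S" using exp_puiseux.gen[OF N0, of r] by simp
  have natS: "of_nat t \<in> ?S" for t
    by (induction t) (auto intro: exp_puiseux.intros one simp: add.commute)
  have at1: "a = 1" if "a \<in> atoms ?S" for a
  proof -
    have aS: "a \<in> ?S" "a \<noteq> 0" using that unfolding atoms_def by auto
    from inN[OF aS(1)] obtain t where t: "a = of_nat t" by (auto elim: Nats_cases)
    show ?thesis
    proof (rule ccontr)
      assume "a \<noteq> 1"
      then have t2: "t \<ge> 2" using aS t by (cases t) auto
      have "a = 1 + of_nat (t - 1)" using t t2 by (simp add: of_nat_diff)
      moreover have "of_nat (t - 1) \<noteq> (0::rat)" using t2 by simp
      moreover have "\<forall>b\<in>?S. \<forall>c\<in>?S. a = b + c \<longrightarrow> b = 0 \<or> c = 0"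
        using that unfolding atoms_def by blast
      ultimately show False using one natS[of "t-1"] by force
    qed
  qed
  have td: "tame_degree ?S a \<le> 0" if "a \<in> atoms ?S" for a
    unfolding tame_degree_def
  proof (rule Inf_lower, simp only: mem_Collect_eq, intro ballI impI)
    fix y z
    assume y: "y \<in> ?S" and ew: "\<exists>w\<in>factorizations ?S y. a \<in># w" and z: "z \<in> factorizations ?S y"
    from ew obtain w where w: "w \<in> factorizations ?S y" "a \<in># w" by blast
    have "\<forall>x\<in>#w. x = 1" using w(1) at1 unfolding factorizations_def by auto
    then have "sum_mset w = of_nat (size w) * 1" by (rule sum_const)
    moreover have "size w \<noteq> 0" using w(2) by auto
    moreover have "sum_mset w = y" using w(1) unfolding factorizations_def by simp
    ultimately have "y \<noteq> 0" by simp
    then have "z \<noteq> {#}" using z unfolding factorizations_def by auto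
    then obtain x where x: "x \<in># z" by blast
    then have "x = 1" using z at1 unfolding factorizations_def by auto
    moreover have "a = 1" using that by (rule at1)
    ultimately have "a \<in># z" using x by simp
    moreover have "fact_dist z z = 0" unfolding fact_dist_def by simp
    ultimately show "\<exists>z'\<in>factorizations ?S y. a \<in># z' \<and> enat (fact_dist z z') \<le> 0"
      using z by (metis order_refl zero_enat_def)
  qed
  have "monoid_tame_degree ?S \<le> 0"
    unfolding monoid_tame_degree_def using td by (intro SUP_least) blast
  then show ?thesis unfolding globally_tame_def
    by (metis enat_ord_code(4) order_le_less_trans zero_enat_def)
qed



lemma big_case:
  fixes p q :: nat
  assumes r: "r = of_nat p / of_nat q" and pq: "q < p" "0 < q" "coprime p q" "q \<noteq> 1"
    and nm: "numerical_monoid N"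
  shows "\<exists>a\<in>atoms (exp_puiseux r N). tame_degree (exp_puiseux r N) a = \<infinity>"
proof -
  let ?S = "exp_puiseux r N"
  have r1: "r > 1" using r pq by simp
  have r0: "r > 0" using r1 by simp
  have N0: "0 \<in> N" using nm unfolding numerical_monoid_def by simp
  obtain B0 where B0: "\<forall>k\<ge>B0. k \<in> N" using nm_bound[OF nm] by blast
  have ge1: "x \<noteq> 0 \<longrightarrow> 1 \<le> x" if "x \<in> ?S" for x
    using that
  proof induction
    case (gen k) then show ?case using r1 by (simp add: one_le_power)
  next
    case (add x y)
    have "0 \<le> x" "0 \<le> y" using ep_nonneg[OF r0 add.hyps(1)] ep_nonneg[OF r0 add.hyps(2)] by auto
    show ?case
    proof (cases "x = 0")
      case True then show ?thesis using add.IH(2) by simp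
    next
      case False then have "1 \<le> x" using add.IH(1) by blast
      then show ?thesis using \<open>0 \<le> y\<close> by linarith
    qed
  qed simp
  have one: "(1::rat) \<in> ?S" using exp_puiseux.gen[OF N0, of r] by simp
  have at1: "1 \<in> atoms ?S"
  proof -
    have "b = 0 \<or> c = 0" if "b \<in> ?S" "c \<in> ?S" "1 = b + c" for b c
    proof (rule ccontr)
      assume "\<not> (b = 0 \<or> c = 0)"
      then have "1 \<le> b" "1 \<le> c" using ge1 that(1,2) by auto
      then show False using that(3) by linarith
    qed
    then show ?thesis unfolding atoms_def using one by auto
  qed
  have qadic: "x < r^n \<longrightarrow> (\<exists>i::int. of_nat q^(n-1) * x = of_int i)" if "x \<in> ?S" "1 \<le> n" for x n
    using that(1)
  proof induction
    case zero then show ?case by auto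
  next
    case (gen k)
    show ?case
    proof
      assume "r^k < r^n"
      then have "k < n" using r1 by (simp add: power_strict_increasing_iff)
      then have "n - 1 = k + (n-1-k)" by simp
      then have "(of_nat q::rat)^(n-1) = of_nat q^k * of_nat q^(n-1-k)" by (metis power_add)
      then have "(of_nat q::rat)^(n-1) * r^k = of_int (int (p^k * q^(n-1-k)))"
        using pq r by (simp add: power_divide)
      then show "\<exists>i::int. of_nat q^(n-1) * r^k = of_int i" by blast
    qed
  next
    case (add x y)
    show ?case
    proof
      assume "x + y < r^n"
      moreover have "0 \<le> x" "0 \<le> y" using ep_nonneg[OF r0] add.hyps by auto
      ultimately obtain i j where "of_nat q^(n-1) * x = of_int i" "of_nat q^(n-1) * y = of_int j"
        using add.IH by fastforce
      then have "of_nat q^(n-1) * (x + y) = of_int (i + j)" by (simp add: algebra_simps)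
      then show "\<exists>i::int. of_nat q^(n-1) * (x + y) = of_int i" by blast
    qed
  qed
  have atn: "r^n \<in> atoms ?S" if "n \<in> N" "1 \<le> n" for n
  proof -
    have rS: "r^n \<in> ?S" using exp_puiseux.gen[OF that(1)] .
    have "b = 0 \<or> c = 0" if bS: "b \<in> ?S" and cS: "c \<in> ?S" and bc: "r^n = b + c" for b c
    proof (rule ccontr)
      assume "\<not> (b = 0 \<or> c = 0)"
      then have "b > 0" "c > 0" using ep_nonneg[OF r0] bS cS by (auto simp: less_le)
      then have "b < r^n" "c < r^n" using bc by auto
      then obtain i j where "of_nat q^(n-1) * b = of_int i" "of_nat q^(n-1) * c = of_int j"
        using qadic bS cS \<open>1 \<le> n\<close> by blast
      then have "of_nat q^(n-1) * r^n = of_int (i + j)" using bc by (simp add: algebra_simps)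
      moreover have "(of_nat q::rat)^(n-1) * r^n = of_nat (p^n) / of_nat q"
      proof -
        have "(of_nat q::rat)^n = of_nat q ^ (n-1) * of_nat q" using \<open>1 \<le> n\<close>
          by (metis Suc_diff_le diff_Suc_1 power_Suc2)
        then show ?thesis using r pq by (simp add: power_divide)
      qed
      ultimately have "of_nat (p^n) = (of_int (i+j) * of_nat q :: rat)" using pq by (simp add: field_simps)
      then have "int (p^n) = (i+j) * int q" by (metis of_int_eq_iff of_int_mult of_int_of_nat_eq)
      then have "int q dvd int (p^n)" by simp
      then have "q dvd p^n" by (simp only: int_dvd_int_iff)
      moreover have "coprime q (p^n)" using pq by (simp add: coprime_commute)
      ultimately have "is_unit q" using coprime_common_divisor[of q "p^n" q] by simp
      then show False using pq by simp
    qed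
    moreover have "r^n \<noteq> 0" using r0 by simp
    ultimately show ?thesis unfolding atoms_def using rS by blast
  qed
  have "tame_degree ?S 1 = \<infinity>"
  proof (rule tame_inf)
    fix D :: nat
    obtain m where m: "2^D < (of_nat p / of_nat q :: rat)^m" using rat_arch_pow[of "of_nat p / of_nat q" "2^D"] r1 r by auto
    define n where "n = max (m+1) B0"
    have n1: "1 \<le> n" and nN: "n \<in> N" using B0 unfolding n_def by auto
    have "(of_nat p / of_nat q :: rat)^m \<le> (of_nat p / of_nat q)^(n-1)"
      using r1 r unfolding n_def by (intro power_increasing) auto
    with m have "2^D < (of_nat p / of_nat q :: rat)^(n-1)" by simp
    then have "(2::rat)^D * of_nat q^(n-1) < of_nat p^(n-1)" using pq by (simp add: power_divide pos_less_divide_eq)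
    then have big: "q^(n-1) * 2^D < p^(n-1)"
      by (metis (mono_tags, opaque_lifting) mult.commute of_nat_less_iff of_nat_mult of_nat_numeral of_nat_power)
    define y where "y = (of_nat (p^n) :: rat)"
    define w where "w = replicate_mset (p^n) (1::rat)"
    define z where "z = replicate_mset (q^n) (r^n)"
    have rn: "(of_nat (q^n)::rat) * r^n = of_nat (p^n)" using r pq by (simp add: power_divide)
    have wf: "w \<in> factorizations ?S y" unfolding factorizations_def w_def y_def using at1 by auto
    have zf: "z \<in> factorizations ?S y" unfolding factorizations_def z_def y_def using atn[OF nN n1] rn by auto
    have "set_mset w \<subseteq> ?S" using wf atoms_sub[of ?S] unfolding factorizations_def by blast
    then have "sum_mset w \<in> ?S" by (rule sum_in_ep)
    then have yS: "y \<in> ?S" using wf unfolding factorizations_def by simp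
    have w1: "1 \<in># w" unfolding w_def using pq by simp
    show "\<exists>y\<in>?S. (\<exists>w\<in>factorizations ?S y. 1 \<in># w) \<and>
      (\<exists>z\<in>factorizations ?S y. \<forall>z'\<in>factorizations ?S y. 1 \<in># z' \<longrightarrow> D < fact_dist z z')"
    proof (intro bexI conjI)
      show "\<forall>z'\<in>factorizations ?S y. 1 \<in># z' \<longrightarrow> D < fact_dist z z'"
      proof (intro ballI impI)
        fix z' assume z': "z' \<in> factorizations ?S y" "1 \<in># z'"
        define u where "u = z - (z \<inter># z')"
        define u' where "u' = z' - (z \<inter># z')"
        have "1 < r^n" using r1 n1 by (intro one_less_power) auto
        then have "r^n \<noteq> 1" by simp
        then have "1 \<notin># z" unfolding z_def by auto
        then have u'1: "1 \<in># u'" unfolding u'_def using mem_diff_inter z'(2) by metis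
        have sumeq: "sum_mset u = sum_mset u'" unfolding u_def u'_def
          using zf z' unfolding factorizations_def by (intro sum_diff_eq) simp
        have "\<forall>x\<in>#u. x = r^n"
        proof
          fix x assume "x \<in># u"
          then have "x \<in># z" unfolding u_def by (rule in_diffD)
          then show "x = r^n" unfolding z_def by (simp split: if_splits)
        qed
        then have su: "sum_mset u = of_nat (size u) * r^n" by (rule sum_const)
        have u'at: "\<forall>x\<in>#u'. \<exists>k. x = r^k"
          using z'(1) atom_gen[OF r0] unfolding u'_def factorizations_def by (fastforce dest: in_diffD)
        define idx where "idx x = (SOME k. x = r^k)" for x
        have idx: "r ^ idx x = x" if "x \<in># u'" for x
          using u'at that unfolding idx_def by (metis (mono_tags, lifting) someI_ex)
        define K where "K = image_mset idx u'"
        have imK: "image_mset (\<lambda>k. r^k) K = u'"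
          unfolding K_def multiset.map_comp comp_def using idx by (simp add: image_mset_cong)
        have "r ^ idx 1 = 1" using idx[OF u'1] .
        then have "idx 1 = 0" using r1 by (metis one_less_power not_gr0 less_irrefl)
        then have K0: "0 \<in># K" unfolding K_def using u'1 by (metis image_eqI set_image_mset)
        have "(\<Sum>k\<in>#K. (of_nat p / of_nat q :: rat)^k) = of_nat (size u) * (of_nat p / of_nat q)^n"
          using imK sumeq su r by simp
        from count_bound[OF pq(1,2,3) K0 n1 this]
        have cb: "p^(n-1) \<le> q^(n-1) * 2^(size u')" unfolding K_def by simp
        have "size u' \<le> fact_dist z z'" unfolding u'_def by (rule dist_ge(2))
        show "D < fact_dist z z'"
        proof (rule ccontr)
          assume "\<not> D < fact_dist z z'"
          then have "size u' \<le> D" using \<open>size u' \<le> fact_dist z z'\<close> by simp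
          then have "(2::nat)^(size u') \<le> 2^D" by (intro power_increasing) auto
          then have "q^(n-1) * 2^(size u') \<le> q^(n-1) * 2^D" by (rule mult_le_mono2)
          with cb have "p^(n-1) \<le> q^(n-1) * 2^D" by (rule order_trans)
          then show False using big by linarith
        qed
      qed
    qed (use yS wf w1 zf in auto)
  qed
then show ?thesis using at1 by blast
qed



lemma small_case:
  fixes p q :: nat
  assumes r: "r = of_nat p / of_nat q" and pq: "0 < q" "0 < p" and r1: "r < 1"
    and nm: "numerical_monoid N" and at: "atomic (exp_puiseux r N)"
  shows "\<exists>a\<in>atoms (exp_puiseux r N). tame_degree (exp_puiseux r N) a = \<infinity>"
proof -
  let ?S = "exp_puiseux r N"
  have r0: "r > 0" using r pq by simp
  have N0: "0 \<in> N" using nm unfolding numerical_monoid_def by simp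
  obtain B0 where B0: "\<forall>k\<ge>B0. k \<in> N" using nm_bound[OF nm] by blast
  have one: "(1::rat) \<in> ?S" using exp_puiseux.gen[OF N0, of r] by simp
  obtain f1 where f1: "f1 \<in> factorizations ?S 1" using at one unfolding atomic_def by fastforce
  then have "f1 \<noteq> {#}" unfolding factorizations_def by auto
  then obtain a where "a \<in># f1" by blast
  then have aA: "a \<in> atoms ?S" using f1 unfolding factorizations_def by auto
  then obtain k0 where k0: "k0 \<in> N" "a = r^k0" using atom_gen[OF r0] by blast
  have atS: "\<forall>x\<in>#v. 0 \<le> x" if "v \<in> factorizations ?S t" for v t
    using that atoms_sub[of ?S] ep_nonneg[OF r0] unfolding factorizations_def by blast
  have "tame_degree ?S a = \<infinity>"
  proof (rule tame_inf)
    fix D :: nat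
    obtain j0 where j0: "of_nat D < (1/r)^j0" using rat_arch_pow[of "1/r" "of_nat D"] r0 r1 by auto
    define j where "j = max j0 (max 1 B0)"
    define m where "m = k0 + j"
    have j1: "1 \<le> j" and mN: "m \<in> N" using B0 unfolding j_def m_def by auto
    have "(1/r)^j0 \<le> (1/r)^j" using r0 r1 unfolding j_def by (intro power_increasing) auto
    with j0 have Dj: "of_nat D < (1/r)^j" by simp
    have eS: "r^m \<in> ?S" using exp_puiseux.gen[OF mN] .
    have "r^m \<noteq> 0" using r0 by simp
    then obtain f where f: "f \<in> factorizations ?S (r^m)" using at eS unfolding atomic_def by blast
    have fle: "\<forall>x\<in>#f. x \<le> r^m"
    proof
      fix x assume "x \<in># f"
      with atS[OF f] have "x \<le> sum_mset f" by (rule elem_le_sum)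
      then show "x \<le> r^m" using f unfolding factorizations_def by simp
    qed
    define z where "z = repeat_mset (q^j) f"
    have zsub: "x \<in># f" if "x \<in># z" for x
    proof -
      have "count z x \<noteq> 0" using that by (simp add: count_eq_zero_iff)
      then have "count f x \<noteq> 0" unfolding z_def by simp
      then show ?thesis by (simp add: count_eq_zero_iff)
    qed
    define y where "y = of_nat (q^j) * r^m"
    define w where "w = replicate_mset (p^j) a"
    have yeq: "of_nat (p^j) * a = y"
    proof -
      have "(of_nat q * r::rat) = of_nat p" using r pq by simp
      then have "(of_nat q::rat)^j * r^j = of_nat p ^ j" by (metis power_mult_distrib)
      then show ?thesis unfolding y_def m_def k0(2) by (simp add: power_add algebra_simps)
    qed
    have wf: "w \<in> factorizations ?S y" unfolding factorizations_def w_def using aA yeq by auto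
    have zf: "z \<in> factorizations ?S y"
      unfolding factorizations_def using f zsub unfolding factorizations_def z_def y_def
      by (auto simp: sum_repeat)
    have "set_mset w \<subseteq> ?S" using wf atoms_sub[of ?S] unfolding factorizations_def by blast
    then have "sum_mset w \<in> ?S" by (rule sum_in_ep)
    then have yS: "y \<in> ?S" using wf unfolding factorizations_def by simp
    have wa: "a \<in># w" unfolding w_def using pq by simp
    have "r^m < r^k0" unfolding m_def using r0 r1 j1 by (intro power_strict_decreasing) auto
    then have anz: "a \<notin># z" using zsub fle k0(2) by fastforce
    show "\<exists>y\<in>?S. (\<exists>w\<in>factorizations ?S y. a \<in># w) \<and>
      (\<exists>z\<in>factorizations ?S y. \<forall>z'\<in>factorizations ?S y. a \<in># z' \<longrightarrow> D < fact_dist z z')"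
    proof (intro bexI conjI)
      show "\<forall>z'\<in>factorizations ?S y. a \<in># z' \<longrightarrow> D < fact_dist z z'"
      proof (intro ballI impI)
        fix z' assume z': "z' \<in> factorizations ?S y" "a \<in># z'"
        define u where "u = z - (z \<inter># z')"
        define u' where "u' = z' - (z \<inter># z')"
        have u'a: "a \<in># u'" unfolding u'_def using mem_diff_inter z'(2) anz by metis
        have sumeq: "sum_mset u = sum_mset u'" unfolding u_def u'_def
          using zf z' unfolding factorizations_def by (intro sum_diff_eq) simp
        have "\<forall>x\<in>#u'. 0 \<le> x" using atS[OF z'(1)] unfolding u'_def by (auto dest: in_diffD)
        then have "a \<le> sum_mset u'" using u'a by (rule elem_le_sum)
        moreover have "\<forall>x\<in>#u. x \<le> r^m" using fle zsub unfolding u_def by (auto dest: in_diffD)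
        then have "sum_mset u \<le> of_nat (size u) * r^m" by (rule sum_le_size)
        ultimately have "r^k0 \<le> of_nat (size u) * r^m" using sumeq k0(2) by simp
        moreover have "r^k0 = (1/r)^j * r^m" unfolding m_def using r0
          by (simp add: power_add power_one_over field_simps)
        ultimately have "(1/r)^j * r^m \<le> of_nat (size u) * r^m" by simp
        then have "(1/r)^j \<le> of_nat (size u)" using r0 by (simp add: mult_le_cancel_right)
        with Dj have "D < size u" by simp
        moreover have "size u \<le> fact_dist z z'" unfolding u_def by (rule dist_ge(1))
        ultimately show "D < fact_dist z z'" by simp
      qed
    qed (use yS wf wa zf in auto)
  qed
  then show ?thesis using aA by blast
qed


theorem mainTheorem16:
  fixes r :: rat and N :: "nat set"
  assumes "r > 0" and "numerical_monoid N" and "atomic (exp_puiseux r N)"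
  shows "(r \<in> \<nat> \<longleftrightarrow> locally_tame (exp_puiseux r N))
       \<and> (locally_tame (exp_puiseux r N) \<longleftrightarrow> globally_tame (exp_puiseux r N))"
proof -
  let ?S = "exp_puiseux r N"
  obtain p q :: nat where r: "r = of_nat p / of_nat q" and pq: "0 < q" "0 < p" "coprime p q"
    using rat_pq[OF assms(1)] by blast
  show ?thesis
  proof (cases "r \<in> \<nat>")
    case True
    have "globally_tame ?S" using int_case[OF True assms(2)] .
    moreover then have "locally_tame ?S" by (rule glob_loc)
    ultimately show ?thesis using True by blast
  next
    case False
    have q1: "q \<noteq> 1"
    proof
      assume "q = 1" then have "r = of_nat p" using r by simp
      then show False using False by simp
    qed
    have r1: "r \<noteq> 1" using False by auto
    have ex: "\<exists>a\<in>atoms ?S. tame_degree ?S a = \<infinity>"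
    proof (cases "r < 1")
      case True
      show ?thesis using small_case[OF r pq(1,2) True assms(2,3)] .
    next
      case False
      then have "1 < r" using r1 by simp
      then have "q < p" using r pq by (simp add: less_divide_eq)
      show ?thesis using big_case[OF r \<open>q < p\<close> pq(1,3) q1 assms(2)] .
    qed
    then have nl: "\<not> locally_tame ?S" unfolding locally_tame_def by auto
    then have "\<not> globally_tame ?S" using glob_loc by blast
    then show ?thesis using nl False by blast
  qed
qed

end
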